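(* Let $\mathbf{m}\in\mathbb{R}^{kn\times kn}$ be diagonal with strictly positive diagonal and let $b_n=(\mathbf{x}'\mathbf{m}\pi\mathbf{x})^{+}\mathbf{x}'\mathbf{m}\pi y$. If there exists $\mathbf{t}\in\mathbb{R}^{(k+p)\times k}$ with $\mathbf{x}\mathbf{t}=\mathbf{m}^{-1}\pi^{-1}\mathbf{1}$ (i.e. every column of $\mathbf{m}^{-1}\pi^{-1}\mathbf{1}$ lies in the column space of $\mathbf{x}$), then $$\frac1n\mathbf{1}'\mathbf{x}b_n=\frac1n\mathbf{1}'y,$$ i.e. the probability limit of the completely imputed (and WLS) estimator equals the vector of average potential outcomes.
   Context: $k$ arms, $n$ units, $p$ covariates. $y\in\mathbb{R}^{kn}$ stacks the potential outcome vectors of the $k$ arms. $\pi\in\mathbb{R}^{kn\times kn}$ is the diagonal matrix of assignment probabilities $\pi_{ai}\in(0,1)$ (ordered arm by arm). $\mathbf{1}=I_k\otimes1_n\in\mathbb{R}^{kn\times k}$. With covariate matrix $X\in\mathbb{R}^{n\times p}$, $\mathbf{x}=[\mathbf{1}\mid1_k\otimes X]\in\mathbb{R}^{kn\times(k+p)}$. $A^+$ is the Moore–Penrose inverse. *)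

theory Defs
  imports "Jordan_Normal_Form.Matrix"
begin

definition is_mp_inverse :: "real mat \<Rightarrow> real mat \<Rightarrow> bool" where
  "is_mp_inverse A B \<longleftrightarrow>
     B \<in> carrier_mat (dim_col A) (dim_row A) \<and>
     A * B * A = A \<and> B * A * B = B \<and>
     transpose_mat (A * B) = A * B \<and> transpose_mat (B * A) = B * A"

definition mp_inverse :: "real mat \<Rightarrow> real mat" where
  "mp_inverse A = (THE B. is_mp_inverse A B)"

(* bold 1 = I_k \<otimes> 1_n : (kn) x k; row index r = a*n + i (arm a, unit i) *)
definition ones_blk :: "nat \<Rightarrow> nat \<Rightarrow> real mat" where
  "ones_blk k n = mat (k * n) k (\<lambda>(r, c). if r div n = c then 1 else 0)"

(* 1_k \<otimes> X : (kn) x p *)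
definition kron_ones :: "nat \<Rightarrow> real mat \<Rightarrow> real mat" where
  "kron_ones k X = mat (k * dim_row X) (dim_col X) (\<lambda>(r, c). X $$ (r mod dim_row X, c))"

(* bold x = [ bold 1 | 1_k \<otimes> X ] : (kn) x (k+p) *)
definition design :: "nat \<Rightarrow> real mat \<Rightarrow> real mat" where
  "design k X = four_block_mat (ones_blk k (dim_row X)) (kron_ones k X)
                  (0\<^sub>m 0 k) (0\<^sub>m 0 (dim_col X))"

end

theory Submission
  imports Defs
begin


lemma gram_zero:
  fixes Y :: "real mat"
  assumes Y: "Y \<in> carrier_mat m e" and d: "\<And>i. i < m \<Longrightarrow> \<delta> i > 0"
    and z: "transpose_mat Y * mat_diag m \<delta> * Y = 0\<^sub>m e e"
  shows "Y = 0\<^sub>m m e"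
proof (rule eq_matI)
  have TD: "transpose_mat Y * mat_diag m \<delta> = mat e m (\<lambda>(j,i). Y $$ (i,j) * \<delta> i)"
    using Y by (subst mat_diag_mult_right[of _ e], auto)
  fix i j assume i: "i < dim_row (0\<^sub>m m e)" and j: "j < dim_col (0\<^sub>m m e)"
  hence i: "i < m" and j: "j < e" by auto
  have "(transpose_mat Y * mat_diag m \<delta> * Y) $$ (j,j) = (\<Sum>l<m. Y $$ (l,j) * \<delta> l * Y $$ (l,j))"
    unfolding TD using Y j by (auto simp: scalar_prod_def lessThan_atLeast0 intro!: sum.cong)
  hence s: "(\<Sum>l<m. Y $$ (l,j) * \<delta> l * Y $$ (l,j)) = 0" using z j by simp
  have nn: "\<And>l. l \<in> {..<m} \<Longrightarrow> 0 \<le> Y $$ (l,j) * \<delta> l * Y $$ (l,j)"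
  proof -
    fix l assume "l \<in> {..<m}"
    hence "\<delta> l > 0" using d by auto
    thus "0 \<le> Y $$ (l,j) * \<delta> l * Y $$ (l,j)"
      by (metis mult.commute mult.left_commute mult_nonneg_nonneg less_imp_le zero_le_square)
  qed
  have "Y $$ (i,j) * \<delta> i * Y $$ (i,j) = 0"
    using sum_nonneg_eq_0_iff[of "{..<m}", OF _ nn] s i by auto
  with d[OF i] have "Y $$ (i,j) = 0" by auto
  thus "Y $$ (i,j) = 0\<^sub>m m e $$ (i,j)" using i j by simp
qed (use Y in auto)



lemma homog:
  fixes a :: "nat \<Rightarrow> nat \<Rightarrow> real"
  assumes "finite J" "m < card J"
  shows "\<exists>x. (\<forall>j. j \<notin> J \<longrightarrow> x j = 0) \<and> (\<exists>j\<in>J. x j \<noteq> 0) \<and> (\<forall>i<m. (\<Sum>j\<in>J. a i j * x j) = 0)"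
  using assms
proof (induction m arbitrary: J a)
  case 0
  then obtain j0 where j0: "j0 \<in> J" by (metis card.empty ex_in_conv less_irrefl)
  show ?case by (rule exI[of _ "\<lambda>j. if j = j0 then 1 else 0"], insert j0, auto)
next
  case (Suc m J a)
  show ?case
  proof (cases "\<forall>j\<in>J. a m j = 0")
    case True
    from Suc.IH[of J a] Suc.prems obtain x where x: "\<forall>j. j \<notin> J \<longrightarrow> x j = 0" "\<exists>j\<in>J. x j \<noteq> 0"
      "\<forall>i<m. (\<Sum>j\<in>J. a i j * x j) = 0" by auto
    show ?thesis
      by (rule exI[of _ x], insert x True, auto simp: less_Suc_eq)
  next
    case False
    then obtain j0 where j0: "j0 \<in> J" and nz: "a m j0 \<noteq> 0" by auto
    define J' where "J' = J - {j0}"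
    have fJ': "finite J'" using Suc.prems unfolding J'_def by auto
    have cJ': "m < card J'" using Suc.prems j0 unfolding J'_def by auto
    define b where "b i j = a i j - a i j0 * a m j / a m j0" for i j
    from Suc.IH[OF fJ' cJ', of b] obtain z where z: "\<forall>j. j \<notin> J' \<longrightarrow> z j = 0" "\<exists>j\<in>J'. z j \<noteq> 0"
      "\<forall>i<m. (\<Sum>j\<in>J'. b i j * z j) = 0" by auto
    define S where "S = (\<Sum>j\<in>J'. a m j * z j)"
    define x where "x = z(j0 := - S / a m j0)"
    have split: "(\<Sum>j\<in>J. a i j * x j) = a i j0 * x j0 + (\<Sum>j\<in>J'. a i j * z j)" for i
    proof -
      have "(\<Sum>j\<in>J. a i j * x j) = a i j0 * x j0 + (\<Sum>j\<in>J'. a i j * x j)"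
        unfolding J'_def using Suc.prems(1) j0 by (simp add: sum.remove)
      also have "(\<Sum>j\<in>J'. a i j * x j) = (\<Sum>j\<in>J'. a i j * z j)"
        by (rule sum.cong, auto simp: x_def J'_def)
      finally show ?thesis .
    qed
    have rows: "(\<Sum>j\<in>J. a i j * x j) = 0" if i: "i < Suc m" for i
    proof (cases "i = m")
      case True
      thus ?thesis unfolding split using nz by (simp add: x_def S_def)
    next
      case False
      with i have i: "i < m" by auto
      have "(\<Sum>j\<in>J'. b i j * z j) = (\<Sum>j\<in>J'. a i j * z j) - a i j0 / a m j0 * S"
        unfolding b_def S_def by (simp add: algebra_simps sum_subtractf sum_distrib_left)
      with z(3) i have "(\<Sum>j\<in>J'. a i j * z j) = a i j0 / a m j0 * S" by auto
      thus ?thesis unfolding split using nz by (simp add: x_def)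
    qed
    show ?thesis
    proof (rule exI[of _ x], intro conjI)
      show "\<forall>j. j \<notin> J \<longrightarrow> x j = 0" using z(1) j0 unfolding x_def J'_def by auto
      show "\<exists>j\<in>J. x j \<noteq> 0" using z(2) unfolding x_def J'_def by auto
      show "\<forall>i<Suc m. (\<Sum>j\<in>J. a i j * x j) = 0" using rows by auto
    qed
  qed
qed



definition lc :: "nat \<Rightarrow> (nat \<Rightarrow> real) \<Rightarrow> nat \<Rightarrow> (nat \<Rightarrow> real mat) \<Rightarrow> real mat" where
  "lc d c N M = mat d d (\<lambda>(i,k). \<Sum>j<N. c j * M j $$ (i,k))"

lemma lc_carrier[simp]: "lc d c N M \<in> carrier_mat d d" unfolding lc_def by auto
lemma lc_dims[simp]: "dim_row (lc d c N M) = d" "dim_col (lc d c N M) = d" unfolding lc_def by auto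

lemma mult_lc_left:
  assumes A: "A \<in> carrier_mat d d" and M: "\<And>j. M j \<in> carrier_mat d d"
  shows "A * lc d c N M = lc d c N (\<lambda>j. A * M j)"
proof (rule eq_matI)
  fix i k assume "i < dim_row (lc d c N (\<lambda>j. A * M j))" "k < dim_col (lc d c N (\<lambda>j. A * M j))"
  hence i: "i < d" and k: "k < d" by auto
  have "(A * lc d c N M) $$ (i,k) = (\<Sum>l<d. A $$ (i,l) * (\<Sum>j<N. c j * M j $$ (l,k)))"
    using A i k M by (auto simp: lc_def scalar_prod_def lessThan_atLeast0 carrier_matD[OF M] intro!: sum.cong)
  also have "\<dots> = (\<Sum>j<N. c j * (\<Sum>l<d. A $$ (i,l) * M j $$ (l,k)))"
    by (simp add: sum_distrib_left algebra_simps sum.swap[of _ "{..<d}"])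
  also have "\<dots> = lc d c N (\<lambda>j. A * M j) $$ (i,k)"
    using A i k M by (auto simp: lc_def scalar_prod_def lessThan_atLeast0 carrier_matD[OF M] intro!: sum.cong)
  finally show "(A * lc d c N M) $$ (i,k) = lc d c N (\<lambda>j. A * M j) $$ (i,k)" .
qed (use A in auto)

lemma mult_lc_right:
  assumes A: "A \<in> carrier_mat d d" and M: "\<And>j. M j \<in> carrier_mat d d"
  shows "lc d c N M * A = lc d c N (\<lambda>j. M j * A)"
proof (rule eq_matI)
  fix i k assume "i < dim_row (lc d c N (\<lambda>j. M j * A))" "k < dim_col (lc d c N (\<lambda>j. M j * A))"
  hence i: "i < d" and k: "k < d" by auto
  have "(lc d c N M * A) $$ (i,k) = (\<Sum>l<d. (\<Sum>j<N. c j * M j $$ (i,l)) * A $$ (l,k))"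
    using A i k M by (auto simp: lc_def scalar_prod_def lessThan_atLeast0 carrier_matD[OF M] intro!: sum.cong)
  also have "\<dots> = (\<Sum>j<N. c j * (\<Sum>l<d. M j $$ (i,l) * A $$ (l,k)))"
    by (simp add: sum_distrib_left sum_distrib_right algebra_simps sum.swap[of _ "{..<d}"])
  also have "\<dots> = lc d c N (\<lambda>j. M j * A) $$ (i,k)"
    using A i k M by (auto simp: lc_def scalar_prod_def lessThan_atLeast0 carrier_matD[OF M] intro!: sum.cong)
  finally show "(lc d c N M * A) $$ (i,k) = lc d c N (\<lambda>j. M j * A) $$ (i,k)" .
qed (use A in auto)

lemma transpose_lc:
  assumes M: "\<And>j. M j \<in> carrier_mat d d"
  shows "transpose_mat (lc d c N M) = lc d c N (\<lambda>j. transpose_mat (M j))"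
  by (rule eq_matI, insert M, auto simp: lc_def carrier_matD[OF M])

lemma lc_Suc0:
  assumes M: "\<And>j. M j \<in> carrier_mat d d"
  shows "lc d c (Suc N) M = c 0 \<cdot>\<^sub>m M 0 + lc d (\<lambda>j. c (Suc j)) N (\<lambda>j. M (Suc j))"
  by (rule eq_matI, insert M, auto simp del: sum.lessThan_Suc simp: lc_def sum.lessThan_Suc_shift carrier_matD[OF M])

lemma lc_shift:
  assumes "\<And>j. j < r \<Longrightarrow> c j = 0"
  shows "lc d c (r + N) M = lc d (\<lambda>j. c (j + r)) N (\<lambda>j. M (j + r))"
  using assms
proof (induction r arbitrary: c M)
  case 0 thus ?case by simp
next
  case (Suc r c M)
  have "lc d c (Suc r + N) M = mat d d (\<lambda>(i,k). \<Sum>j<Suc (r + N). c j * M j $$ (i,k))"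
    unfolding lc_def by simp
  also have "\<dots> = mat d d (\<lambda>(i,k). \<Sum>j<r + N. c (Suc j) * M (Suc j) $$ (i,k))"
    using Suc.prems[of 0] by (simp del: sum.lessThan_Suc add: sum.lessThan_Suc_shift)
  also have "\<dots> = lc d (\<lambda>j. c (Suc j)) (r + N) (\<lambda>j. M (Suc j))" unfolding lc_def by simp
  also have "\<dots> = lc d (\<lambda>j. c (Suc (j + r))) N (\<lambda>j. M (Suc (j + r)))"
    using Suc.IH[of "\<lambda>j. c (Suc j)" "\<lambda>j. M (Suc j)"] Suc.prems by auto
  finally show ?case by simp
qed

lemma pow_comm: assumes S: "S \<in> carrier_mat d d" shows "S * S ^\<^sub>m j = S ^\<^sub>m j * S"
proof (induction j)
  case 0 thus ?case using S by simp
next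
  case (Suc j)
  have "S * S ^\<^sub>m Suc j = (S * S ^\<^sub>m j) * S" using assoc_mult_mat[OF S pow_carrier_mat[OF S] S] by simp
  also have "\<dots> = S ^\<^sub>m Suc j * S" using Suc S by simp
  finally show ?case .
qed

lemma pow_Suc': assumes S: "S \<in> carrier_mat d d" shows "S ^\<^sub>m Suc j = S * S ^\<^sub>m j"
  using pow_comm[OF S] by simp

lemma pow_add': assumes S: "S \<in> carrier_mat d d" shows "S ^\<^sub>m (j + r) = S ^\<^sub>m r * S ^\<^sub>m j"
proof (induction j)
  case 0 thus ?case using S by simp
next
  case (Suc j)
  have "S ^\<^sub>m (Suc j + r) = S ^\<^sub>m (j + r) * S" by simp
  also have "\<dots> = S ^\<^sub>m r * S ^\<^sub>m j * S" using Suc by simp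
  also have "\<dots> = S ^\<^sub>m r * S ^\<^sub>m Suc j" using assoc_mult_mat[OF pow_carrier_mat[OF S] pow_carrier_mat[OF S] S] by simp
  finally show ?case .
qed

lemma pow_transpose: fixes S :: "real mat" assumes S: "S \<in> carrier_mat d d" and T: "transpose_mat S = S"
  shows "transpose_mat (S ^\<^sub>m j) = S ^\<^sub>m j"
proof (induction j)
  case 0 thus ?case using S by simp
next
  case (Suc j)
  have "transpose_mat (S ^\<^sub>m Suc j) = transpose_mat S * transpose_mat (S ^\<^sub>m j)"
    using transpose_mult[OF pow_carrier_mat[OF S] S] by simp
  thus ?case using Suc T pow_Suc'[OF S] by simp
qed

lemma poly_rel:
  assumes S: "S \<in> carrier_mat d d"
  shows "\<exists>c N. (\<exists>j<N. c j \<noteq> 0) \<and> lc d c N (\<lambda>j. S ^\<^sub>m j) = 0\<^sub>m d d"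
proof -
  define a where "a i j = (S ^\<^sub>m j) $$ (i div d, i mod d)" for i j
  from homog[of "{..<d*d+1}" "d*d" a] obtain x where
    x: "\<exists>j\<in>{..<d*d+1}. x j \<noteq> 0" "\<forall>i<d*d. (\<Sum>j\<in>{..<d*d+1}. a i j * x j) = 0" by auto
  show ?thesis
  proof (rule exI[of _ x], rule exI[of _ "d*d+1"], rule conjI)
    show "\<exists>j<d*d+1. x j \<noteq> 0" using x(1) by auto
    show "lc d x (d*d+1) (\<lambda>j. S ^\<^sub>m j) = 0\<^sub>m d d"
    proof (rule eq_matI)
      fix i k assume "i < dim_row (0\<^sub>m d d :: real mat)" "k < dim_col (0\<^sub>m d d :: real mat)"
      hence i: "i < d" and k: "k < d" by auto
      have lt: "i * d + k < d * d"
      proof -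
        have "i * d + k < Suc i * d" using k by simp
        also have "\<dots> \<le> d * d" using i by (intro mult_le_mono1, simp)
        finally show ?thesis .
      qed
      have dv: "(i * d + k) div d = i" "(i * d + k) mod d = k" using k by auto
      have "lc d x (d*d+1) (\<lambda>j. S ^\<^sub>m j) $$ (i,k) = (\<Sum>j<d*d+1. a (i*d+k) j * x j)"
        using i k unfolding lc_def a_def dv by (auto intro!: sum.cong)
      also have "\<dots> = 0" using x(2) lt by auto
      finally show "lc d x (d*d+1) (\<lambda>j. S ^\<^sub>m j) $$ (i,k) = 0\<^sub>m d d $$ (i,k)" using i k by simp
    qed simp_all
  qed
qed



lemma mp_unique_half:
  fixes A B C :: "real mat"
  assumes A: "A \<in> carrier_mat m n" and Bc: "B \<in> carrier_mat n m" and Cc: "C \<in> carrier_mat n m"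
    and B2: "B * A * B = B" and B3: "transpose_mat (A * B) = A * B"
    and C1: "A * C * A = A" and C3: "transpose_mat (A * C) = A * C"
  shows "B = B * A * C"
proof -
  have At: "transpose_mat A \<in> carrier_mat n m" and Bt: "transpose_mat B \<in> carrier_mat m n"
    and Ct: "transpose_mat C \<in> carrier_mat m n" using A Bc Cc by auto
  have tA: "transpose_mat A = transpose_mat A * (transpose_mat C * transpose_mat A)"
    using arg_cong[OF C1, of transpose_mat]
    unfolding transpose_mult[OF mult_carrier_mat[OF A Cc] A] transpose_mult[OF A Cc] by simp
  have AB: "A * B = transpose_mat B * transpose_mat A" using B3 transpose_mult[OF A Bc] by simp
  have "B = B * (A * B)" using B2 assoc_mult_mat[OF Bc A Bc] by simp
  also have "A * B = (transpose_mat B * transpose_mat A) * (transpose_mat C * transpose_mat A)"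
    using AB tA assoc_mult_mat[OF Bt At mult_carrier_mat[OF Ct At]] by simp
  also have "\<dots> = (A * B) * (A * C)"
    using B3 C3 transpose_mult[OF A Bc] transpose_mult[OF A Cc] by simp
  also have "B * ((A * B) * (A * C)) = (B * A * B) * (A * C)"
    using assoc_mult_mat[OF Bc mult_carrier_mat[OF A Bc] mult_carrier_mat[OF A Cc]] assoc_mult_mat[OF Bc A Bc] by simp
  also have "\<dots> = B * (A * C)" using B2 by simp
  also have "\<dots> = B * A * C" using Bc A Cc by simp
  finally show ?thesis .
qed

lemma transpose3:
  fixes A B C :: "real mat"
  assumes "A \<in> carrier_mat a b" "B \<in> carrier_mat b c" "C \<in> carrier_mat c e"
  shows "transpose_mat (A * B * C) = transpose_mat C * transpose_mat B * transpose_mat A"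
  using transpose_mult[OF mult_carrier_mat[OF assms(1,2)] assms(3)] transpose_mult[OF assms(1,2)] assms
  by (simp add: assoc_mult_mat[of "transpose_mat C" e c _ b _ a])

lemma mp_unique:
  fixes A B C :: "real mat"
  assumes A: "A \<in> carrier_mat m n" and B: "is_mp_inverse A B" and C: "is_mp_inverse A C"
  shows "B = C"
proof -
  from B A have Bc: "B \<in> carrier_mat n m" and B1: "A * B * A = A" and B2: "B * A * B = B"
    and B3: "transpose_mat (A * B) = A * B" and B4: "transpose_mat (B * A) = B * A"
    unfolding is_mp_inverse_def by auto
  from C A have Cc: "C \<in> carrier_mat n m" and C1: "A * C * A = A" and C2: "C * A * C = C"
    and C3: "transpose_mat (A * C) = A * C" and C4: "transpose_mat (C * A) = C * A"
    unfolding is_mp_inverse_def by auto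
  have At: "transpose_mat A \<in> carrier_mat n m" and Bt: "transpose_mat B \<in> carrier_mat m n"
    and Ct: "transpose_mat C \<in> carrier_mat m n" using A Bc Cc by auto
  have 1: "B = B * A * C" by (rule mp_unique_half[OF A Bc Cc B2 B3 C1 C3])
  have 2: "transpose_mat C = transpose_mat C * transpose_mat A * transpose_mat B"
  proof (rule mp_unique_half[OF At Ct Bt])
    show "transpose_mat C * transpose_mat A * transpose_mat C = transpose_mat C"
      using C2 transpose3[OF Cc A Cc] by simp
    show "transpose_mat (transpose_mat A * transpose_mat C) = transpose_mat A * transpose_mat C"
      using C4 transpose_mult[OF Cc A] by simp
    show "transpose_mat A * transpose_mat B * transpose_mat A = transpose_mat A"
      using B1 transpose3[OF A Bc A] by simp
    show "transpose_mat (transpose_mat A * transpose_mat B) = transpose_mat A * transpose_mat B"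
      using B4 transpose_mult[OF Bc A] by simp
  qed
  have "C = transpose_mat (transpose_mat C)" by simp
  also have "\<dots> = B * A * C" by (subst 2, subst transpose3[OF Ct At Bt], simp)
  finally show ?thesis using 1 by simp
qed

lemma mp_inverse_prop:
  assumes A: "A \<in> carrier_mat m n" and ex: "is_mp_inverse A B"
  shows "is_mp_inverse A (mp_inverse A)"
  unfolding mp_inverse_def
  using theI[of "is_mp_inverse A", OF ex] mp_unique[OF A ex] by blast



lemma mp_from_T:
  fixes S T :: "real mat"
  assumes S: "S \<in> carrier_mat d d" and T: "T \<in> carrier_mat d d"
    and St: "transpose_mat S = S" and Tt: "transpose_mat T = T"
    and c: "S * T = T * S" and r: "S * (S * T) = S"
  shows "is_mp_inverse S (T * S * T)"
proof -
  have k1: "S * (T * S) = S" using c r by simp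
  have k2: "S * (T * (S * X)) = S * X" if X: "X \<in> carrier_mat d e" for X e
  proof -
    have "S * (T * (S * X)) = (S * (T * S)) * X"
      using assoc_mult_mat[OF S mult_carrier_mat[OF T S] X] assoc_mult_mat[OF T S X] by simp
    thus ?thesis using k1 by simp
  qed
  have STt: "transpose_mat (S * T) = S * T" using transpose_mult[OF S T] St Tt c by simp
  have TSt: "transpose_mat (T * S) = T * S" using STt c by simp
  have TS: "T * S \<in> carrier_mat d d" and ST: "S * T \<in> carrier_mat d d" using S T by auto
  have TST: "T * S * T \<in> carrier_mat d d" using S T by auto
  have SB: "S * (T * S * T) = S * T"
  proof -
    have "S * (T * S * T) = S * (T * (S * T))" using assoc_mult_mat[OF T S T] by simp
    also have "\<dots> = S * T" using k2[OF T] .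
    finally show ?thesis .
  qed
  have BS: "T * S * T * S = T * S"
  proof -
    have "T * S * T * S = (T * S) * (T * S)" using assoc_mult_mat[OF TS T S] by simp
    also have "\<dots> = T * (S * (T * S))" using assoc_mult_mat[OF T S TS] by simp
    also have "\<dots> = T * S" using k1 by simp
    finally show ?thesis .
  qed
  show ?thesis unfolding is_mp_inverse_def
  proof (intro conjI)
    show "T * S * T \<in> carrier_mat (dim_col S) (dim_row S)" using S T by simp
    show "S * (T * S * T) * S = S" using SB k1 assoc_mult_mat[OF S T S] by simp
    have "T * S * T * S * (T * S * T) = T * S * (T * S * T)" using BS by simp
    also have "\<dots> = T * (S * (T * S * T))" using assoc_mult_mat[OF T S TST] by simp
    also have "\<dots> = T * S * T" using SB assoc_mult_mat[OF T S T] by simp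
    finally show "T * S * T * S * (T * S * T) = T * S * T" .
    show "transpose_mat (S * (T * S * T)) = S * (T * S * T)" using SB STt by simp
    show "transpose_mat (T * S * T * S) = T * S * T * S" using BS TSt by simp
  qed
qed

lemma kernel1:
  fixes S X :: "real mat"
  assumes S: "S \<in> carrier_mat d d" and St: "transpose_mat S = S" and X: "X \<in> carrier_mat d e"
    and z: "S * (S * X) = 0\<^sub>m d e"
  shows "S * X = 0\<^sub>m d e"
proof (rule gram_zero[of _ d e "\<lambda>_. 1"])
  show Y: "S * X \<in> carrier_mat d e" using S X by simp
  have "transpose_mat (S * X) * mat_diag d (\<lambda>_. 1) * (S * X) = transpose_mat (S * X) * (S * X)"
    using right_mult_one_mat[OF transpose_carrier_mat[THEN iffD2, OF Y]] by simp
  also have "\<dots> = transpose_mat X * (S * (S * X))"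
    using transpose_mult[OF S X] St assoc_mult_mat[OF transpose_carrier_mat[THEN iffD2, OF X] S mult_carrier_mat[OF S X]] by simp
  also have "\<dots> = 0\<^sub>m e e" using z X by simp
  finally show "transpose_mat (S * X) * mat_diag d (\<lambda>_. 1) * (S * X) = 0\<^sub>m e e" .
qed simp

lemma kernel_pow:
  fixes S X :: "real mat"
  assumes S: "S \<in> carrier_mat d d" and St: "transpose_mat S = S"
  shows "X \<in> carrier_mat d e \<Longrightarrow> S ^\<^sub>m (Suc r) * X = 0\<^sub>m d e \<Longrightarrow> S * X = 0\<^sub>m d e"
proof (induction r arbitrary: X)
  case 0 thus ?case using S by simp
next
  case (Suc r X)
  have "S ^\<^sub>m (Suc r) * (S * X) = S ^\<^sub>m (Suc (Suc r)) * X"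
    using S Suc.prems(1) assoc_mult_mat[OF pow_carrier_mat[OF S] S Suc.prems(1), of "Suc r"] by simp
  with Suc.prems have "S ^\<^sub>m (Suc r) * (S * X) = 0\<^sub>m d e" by simp
  from Suc.IH[OF _ this] S Suc.prems(1) have "S * (S * X) = 0\<^sub>m d e" by simp
  from kernel1[OF S St Suc.prems(1) this] show ?case .
qed



lemma mp_exists_sym:
  fixes S :: "real mat"
  assumes S: "S \<in> carrier_mat d d" and St: "transpose_mat S = S"
  shows "\<exists>B. is_mp_inverse S B"
proof -
  obtain c N where cN: "\<exists>j<N. c j \<noteq> 0" and z: "lc d c N (\<lambda>j. S ^\<^sub>m j) = 0\<^sub>m d d"
    using poly_rel[OF S] by blast
  define r where "r = (LEAST j. c j \<noteq> 0)"
  from cN obtain j0 where j0: "j0 < N" "c j0 \<noteq> 0" by auto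
  have cr: "c r \<noteq> 0" unfolding r_def using j0(2) by (rule LeastI)
  have rN: "r < N" using Least_le[of "\<lambda>j. c j \<noteq> 0" j0] j0 unfolding r_def by simp
  have below: "c j = 0" if "j < r" for j using not_less_Least[of j "\<lambda>j. c j \<noteq> 0"] that unfolding r_def by blast
  define M where "M = N - r - 1"
  have N: "N = r + Suc M" using rN unfolding M_def by simp
  define pw where "pw = (\<lambda>j. S ^\<^sub>m j)"
  have pwc: "\<And>j. pw j \<in> carrier_mat d d" unfolding pw_def using S by simp
  define G where "G = lc d (\<lambda>j. c (Suc j + r)) M pw"
  define H where "H = lc d (\<lambda>j. c (j + r)) (Suc M) pw"
  have Gc: "G \<in> carrier_mat d d" and Hc: "H \<in> carrier_mat d d" unfolding G_def H_def by auto
  have "lc d c N pw = lc d (\<lambda>j. c (j + r)) (Suc M) (\<lambda>j. pw (j + r))"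
    unfolding N by (rule lc_shift[OF below])
  also have "(\<lambda>j. pw (j + r)) = (\<lambda>j. S ^\<^sub>m r * pw j)" unfolding pw_def using pow_add'[OF S] by auto
  also have "lc d (\<lambda>j. c (j + r)) (Suc M) \<dots> = S ^\<^sub>m r * H"
    unfolding H_def by (rule mult_lc_left[symmetric], insert S pwc, auto)
  finally have SrH: "S ^\<^sub>m r * H = 0\<^sub>m d d" using z unfolding pw_def by simp
  have "H = c (0 + r) \<cdot>\<^sub>m pw 0 + lc d (\<lambda>j. c (Suc j + r)) M (\<lambda>j. pw (Suc j))"
    unfolding H_def by (rule lc_Suc0[OF pwc])
  also have "(\<lambda>j. pw (Suc j)) = (\<lambda>j. S * pw j)" unfolding pw_def using pow_Suc'[OF S] by auto
  also have "lc d (\<lambda>j. c (Suc j + r)) M \<dots> = S * G"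
    unfolding G_def by (rule mult_lc_left[symmetric], insert S pwc, auto)
  finally have H: "H = c r \<cdot>\<^sub>m 1\<^sub>m d + S * G" unfolding pw_def using S by simp
  have SH: "S * H = 0\<^sub>m d d"
  proof (cases r)
    case 0
    with SrH Hc have "H = 0\<^sub>m d d" using S by simp
    thus ?thesis using S by simp
  next
    case (Suc r')
    show ?thesis by (rule kernel_pow[OF S St Hc], insert SrH Suc, simp)
  qed
  have SSG: "S * (S * G) = (- c r) \<cdot>\<^sub>m S"
  proof -
    have "S * H = c r \<cdot>\<^sub>m S + S * (S * G)" unfolding H using S Gc
      by (simp add: mult_add_distrib_mat[OF S _ mult_carrier_mat[OF S Gc]] mult_smult_distrib[OF S one_carrier_mat])
    with SH have e: "c r \<cdot>\<^sub>m S + S * (S * G) = 0\<^sub>m d d" by simp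
    show ?thesis
    proof (rule eq_matI)
      fix i j assume ij: "i < dim_row ((- c r) \<cdot>\<^sub>m S)" "j < dim_col ((- c r) \<cdot>\<^sub>m S)"
      hence i: "i < d" and j: "j < d" using S by auto
      from arg_cong[OF e, of "\<lambda>A. A $$ (i,j)"] i j S Gc
      have "c r * S $$ (i,j) + (S * (S * G)) $$ (i,j) = 0" by simp
      thus "(S * (S * G)) $$ (i,j) = ((- c r) \<cdot>\<^sub>m S) $$ (i,j)" using i j S by simp
    qed (use S Gc in auto)
  qed
  have GS: "S * G = G * S" unfolding G_def
    by (subst mult_lc_left[OF S pwc], subst mult_lc_right[OF S pwc],
        simp add: pw_def pow_comm[OF S])
  have Gt: "transpose_mat G = G" unfolding G_def
    by (subst transpose_lc[OF pwc], simp add: pw_def pow_transpose[OF S St])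
  define T where "T = (- 1 / c r) \<cdot>\<^sub>m G"
  have Tc: "T \<in> carrier_mat d d" unfolding T_def using Gc by simp
  have Tt: "transpose_mat T = T"
  proof -
    have "transpose_mat T = (- 1 / c r) \<cdot>\<^sub>m transpose_mat G" unfolding T_def by (rule eq_matI, auto)
    thus ?thesis using Gt T_def by simp
  qed
  have ST: "S * T = T * S" unfolding T_def
    using GS mult_smult_distrib[OF S Gc] mult_smult_assoc_mat[OF Gc S] by simp
  have SST: "S * (S * T) = S"
  proof -
    have "S * (S * T) = (- 1 / c r) \<cdot>\<^sub>m (S * (S * G))" unfolding T_def
      using mult_smult_distrib[OF S Gc] mult_smult_distrib[OF S mult_carrier_mat[OF S Gc]] by simp
    also have "\<dots> = S" unfolding SSG using cr S by (intro eq_matI, auto)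
    finally show ?thesis .
  qed
  show ?thesis using mp_from_T[OF S Tc St Tt ST SST] by blast
qed



lemma core:
  fixes x B :: "real mat"
  assumes x: "x \<in> carrier_mat m q" and d: "\<And>i. i < m \<Longrightarrow> \<delta> i > 0"
    and mp: "is_mp_inverse (transpose_mat x * mat_diag m \<delta> * x) B"
  shows "transpose_mat x * mat_diag m \<delta> * x * B * (transpose_mat x * mat_diag m \<delta>)
        = transpose_mat x * mat_diag m \<delta>"
proof -
  define D where "D = mat_diag m \<delta>"
  define XD where "XD = transpose_mat x * D"
  define A where "A = XD * x"
  have Dc: "D \<in> carrier_mat m m" unfolding D_def by simp
  have xt: "transpose_mat x \<in> carrier_mat q m" using x by simp
  have XDc: "XD \<in> carrier_mat q m" unfolding XD_def using xt Dc by simp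
  have Ac: "A \<in> carrier_mat q q" unfolding A_def using XDc x by simp
  from mp have Bc: "B \<in> carrier_mat q q" and B1: "A * B * A = A"
    and B3: "transpose_mat (A * B) = A * B"
    unfolding is_mp_inverse_def A_def XD_def D_def using Ac[unfolded A_def XD_def D_def] by auto
  define P where "P = A * B"
  have Pc: "P \<in> carrier_mat q q" unfolding P_def using Ac Bc by simp
  have Dt: "transpose_mat D = D" unfolding D_def by (rule eq_matI, auto simp: mat_diag_def)
  have At: "transpose_mat A = A"
  proof -
    have "transpose_mat A = transpose_mat x * transpose_mat XD"
      unfolding A_def by (rule transpose_mult[OF XDc x])
    also have "transpose_mat XD = D * x" unfolding XD_def using transpose_mult[OF xt Dc] Dt by simp
    finally show ?thesis unfolding A_def XD_def using assoc_mult_mat[OF xt Dc x] by simp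
  qed
  have PA: "P * A = A" unfolding P_def using B1 .
  have AP: "A * P = A"
  proof -
    have "transpose_mat (P * A) = transpose_mat A * transpose_mat P" by (rule transpose_mult[OF Pc Ac])
    thus ?thesis using PA At B3 unfolding P_def by simp
  qed
  have PAP: "P * A * P = A" using PA AP by simp
  define R where "R = transpose_mat x - P * transpose_mat x"
  have Rc: "R \<in> carrier_mat q m" unfolding R_def using xt Pc by (simp add: minus_carrier_mat)
  have Rt: "transpose_mat R = x - x * P"
  proof -
    have "transpose_mat R = x - transpose_mat (P * transpose_mat x)"
      unfolding R_def using transpose_minus[OF xt mult_carrier_mat[OF Pc xt]] by simp
    also have "transpose_mat (P * transpose_mat x) = x * P"
      using transpose_mult[OF Pc xt] B3 unfolding P_def by simp
    finally show ?thesis .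
  qed
  have "R * D = XD - P * XD"
    unfolding R_def XD_def using minus_mult_distrib_mat[OF xt mult_carrier_mat[OF Pc xt] Dc]
      assoc_mult_mat[OF Pc xt Dc] by simp
  hence "R * D * transpose_mat R = (XD - P * XD) * (x - x * P)" using Rt by simp
  also have "\<dots> = (XD * x - XD * (x * P)) - (P * XD * x - P * XD * (x * P))"
    using minus_mult_distrib_mat[OF XDc mult_carrier_mat[OF Pc XDc] minus_carrier_mat[OF mult_carrier_mat[OF x Pc]]]
      mult_minus_distrib_mat[OF XDc x mult_carrier_mat[OF x Pc]]
      mult_minus_distrib_mat[OF mult_carrier_mat[OF Pc XDc] x mult_carrier_mat[OF x Pc]]
    by simp
  also have "XD * x = A" unfolding A_def ..
  also have "XD * (x * P) = A" using assoc_mult_mat[OF XDc x Pc, symmetric] AP unfolding A_def by simp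
  also have "P * XD * x = A" using assoc_mult_mat[OF Pc XDc x] PA unfolding A_def by simp
  also have "P * XD * (x * P) = A" using assoc_mult_mat[OF Pc XDc x] assoc_mult_mat[OF mult_carrier_mat[OF Pc XDc] x Pc, symmetric]
      PAP unfolding A_def by simp
  also have "(A - A) - (A - A) = 0\<^sub>m q q" using Ac by (intro eq_matI, auto)
  finally have z: "R * D * transpose_mat R = 0\<^sub>m q q" .
  have "transpose_mat R = 0\<^sub>m m q"
  proof (rule gram_zero[of _ m q \<delta>])
    show "transpose_mat R \<in> carrier_mat m q" using Rc by simp
    show "\<And>i. i < m \<Longrightarrow> 0 < \<delta> i" by (rule d)
    show "transpose_mat (transpose_mat R) * mat_diag m \<delta> * transpose_mat R = 0\<^sub>m q q"
      using z unfolding D_def by simp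
  qed
  hence R0: "R = 0\<^sub>m q m"
  proof -
    assume h: "transpose_mat R = 0\<^sub>m m q"
    have "R = transpose_mat (transpose_mat R)" by simp
    also have "\<dots> = 0\<^sub>m q m" unfolding h by (rule eq_matI, auto)
    finally show ?thesis .
  qed
  have xP: "P * transpose_mat x = transpose_mat x"
  proof (rule eq_matI)
    fix i j assume ij: "i < dim_row (transpose_mat x)" "j < dim_col (transpose_mat x)"
    hence i: "i < q" and j: "j < m" using x by auto
    from arg_cong[OF R0, of "\<lambda>M. M $$ (i,j)"] i j xt Pc
    show "(P * transpose_mat x) $$ (i,j) = transpose_mat x $$ (i,j)" unfolding R_def by simp
  qed (use xt Pc in auto)
  have "A * B * XD = P * XD" unfolding P_def ..
  also have "\<dots> = (P * transpose_mat x) * D" unfolding XD_def using assoc_mult_mat[OF Pc xt Dc] by simp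
  also have "\<dots> = XD" unfolding XD_def xP ..
  finally show ?thesis unfolding A_def XD_def D_def .
qed



theorem mainTheorem7:
  fixes k n p :: nat
    and X :: "real mat" and y :: "real vec"
    and pr :: "nat \<Rightarrow> real"   (* diagonal of \<pi>, flat index r = a*n+i *)
    and w :: "nat \<Rightarrow> real"    (* diagonal of m *)
    and t :: "real mat"
  assumes X: "X \<in> carrier_mat n p"
    and y: "y \<in> carrier_vec (k * n)"
    and pr: "\<And>r. r < k * n \<Longrightarrow> 0 < pr r \<and> pr r < 1"
    and w: "\<And>r. r < k * n \<Longrightarrow> 0 < w r"
    and t: "t \<in> carrier_mat (k + p) k"
    and span: "design k X * t =
       mat_diag (k * n) (\<lambda>r. 1 / w r) * mat_diag (k * n) (\<lambda>r. 1 / pr r) * ones_blk k n"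
  shows "(1 / real n) \<cdot>\<^sub>v (transpose_mat (ones_blk k n) *\<^sub>v (design k X *\<^sub>v
            (mp_inverse (transpose_mat (design k X) * mat_diag (k * n) w * mat_diag (k * n) pr * design k X)
             *\<^sub>v (transpose_mat (design k X) * mat_diag (k * n) w * mat_diag (k * n) pr *\<^sub>v y))))
         = (1 / real n) \<cdot>\<^sub>v (transpose_mat (ones_blk k n) *\<^sub>v y)"
proof -
  define m where "m = k * n"
  define q where "q = k + p"
  define x where "x = design k X"
  define \<delta> where "\<delta> r = w r * pr r" for r
  define D where "D = mat_diag m \<delta>"
  define On where "On = ones_blk k n"
  have dpos: "\<And>r. r < m \<Longrightarrow> \<delta> r > 0" unfolding \<delta>_def m_def using w pr by auto
  have Oc: "On \<in> carrier_mat m k" unfolding On_def ones_blk_def m_def by simp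
  have xc: "x \<in> carrier_mat m q"
  proof -
    have "ones_blk k (dim_row X) \<in> carrier_mat (k * n) k" using X unfolding ones_blk_def by simp
    moreover have "(0\<^sub>m 0 (dim_col X) :: real mat) \<in> carrier_mat 0 p" using X by simp
    ultimately have "x \<in> carrier_mat (k * n + 0) (k + p)" unfolding x_def design_def
      by (rule four_block_carrier_mat)
    thus ?thesis unfolding m_def q_def by simp
  qed
  have tq: "t \<in> carrier_mat q k" using t unfolding q_def .
  have xt: "transpose_mat x \<in> carrier_mat q m" using xc by simp
  have Dc: "D \<in> carrier_mat m m" unfolding D_def by simp
  have WP: "mat_diag (k * n) w * mat_diag (k * n) pr = D" unfolding D_def \<delta>_def m_def by simp
  define XD where "XD = transpose_mat x * D"
  have XDc: "XD \<in> carrier_mat q m" unfolding XD_def using xt Dc by simp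
  have C: "transpose_mat x * mat_diag (k * n) w * mat_diag (k * n) pr = XD"
    unfolding XD_def WP[symmetric] using assoc_mult_mat[OF xt, of "mat_diag (k * n) w" m "mat_diag (k * n) pr" m]
    unfolding m_def by simp
  define A where "A = XD * x"
  have Ac: "A \<in> carrier_mat q q" unfolding A_def using XDc xc by simp
  have At: "transpose_mat A = A"
  proof -
    have Dt: "transpose_mat D = D" unfolding D_def by (rule eq_matI, auto simp: mat_diag_def)
    have "transpose_mat A = transpose_mat x * transpose_mat XD"
      unfolding A_def by (rule transpose_mult[OF XDc xc])
    also have "transpose_mat XD = D * x" unfolding XD_def using transpose_mult[OF xt Dc] Dt by simp
    finally show ?thesis unfolding A_def XD_def using assoc_mult_mat[OF xt Dc xc] by simp
  qed
  obtain B0 where "is_mp_inverse A B0" using mp_exists_sym[OF Ac At] by blast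
  from mp_inverse_prop[OF Ac this] have mpA: "is_mp_inverse A (mp_inverse A)" .
  define B where "B = mp_inverse A"
  have Bc: "B \<in> carrier_mat q q" using mpA Ac unfolding is_mp_inverse_def B_def by auto
  have mpB: "is_mp_inverse (transpose_mat x * mat_diag m \<delta> * x) B"
    using mpA unfolding A_def XD_def D_def B_def .
  have key: "A * B * XD = XD"
    using core[OF xc dpos mpB] unfolding A_def XD_def D_def .
  have Dinv: "D * (mat_diag m (\<lambda>r. 1 / w r) * mat_diag m (\<lambda>r. 1 / pr r)) = 1\<^sub>m m"
  proof -
    have "D * (mat_diag m (\<lambda>r. 1 / w r) * mat_diag m (\<lambda>r. 1 / pr r))
      = mat_diag m (\<lambda>r. \<delta> r * (1 / w r * (1 / pr r)))" unfolding D_def by simp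
    also have "\<dots> = 1\<^sub>m m"
    proof (rule eq_matI)
      fix i j assume "i < dim_row (1\<^sub>m m :: real mat)" "j < dim_col (1\<^sub>m m :: real mat)"
      hence i: "i < m" and j: "j < m" by auto
      have "\<delta> i * (1 / w i * (1 / pr i)) = 1" using dpos[OF i] unfolding \<delta>_def by auto
      thus "mat_diag m (\<lambda>r. \<delta> r * (1 / w r * (1 / pr r))) $$ (i, j) = 1\<^sub>m m $$ (i, j)"
        using i j by (auto simp: mat_diag_def)
    qed (auto simp: mat_diag_def)
    finally show ?thesis .
  qed
  have Oeq: "On = D * (x * t)"
  proof -
    have "D * (x * t) = D * ((mat_diag m (\<lambda>r. 1 / w r) * mat_diag m (\<lambda>r. 1 / pr r)) * On)"
      using span unfolding x_def On_def m_def by simp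
    also have "\<dots> = (D * (mat_diag m (\<lambda>r. 1 / w r) * mat_diag m (\<lambda>r. 1 / pr r))) * On"
      using assoc_mult_mat[OF Dc _ Oc, of "mat_diag m (\<lambda>r. 1 / w r) * mat_diag m (\<lambda>r. 1 / pr r)"] by simp
    also have "\<dots> = On" unfolding Dinv using Oc by simp
    finally show ?thesis by simp
  qed
  have Ot: "transpose_mat On = transpose_mat t * XD"
  proof -
    have Dt: "transpose_mat D = D" unfolding D_def by (rule eq_matI, auto simp: mat_diag_def)
    have "transpose_mat On = transpose_mat (x * t) * transpose_mat D"
      unfolding Oeq by (rule transpose_mult[OF Dc mult_carrier_mat[OF xc tq]])
    also have "\<dots> = transpose_mat t * transpose_mat x * D" using transpose_mult[OF xc tq] Dt by simp
    also have "\<dots> = transpose_mat t * XD" unfolding XD_def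
      using assoc_mult_mat[OF transpose_carrier_mat[THEN iffD2, OF tq] xt Dc] by simp
    finally show ?thesis .
  qed
  have tt: "transpose_mat t \<in> carrier_mat k q" using tq by simp
  have yc: "y \<in> carrier_vec m" using y unfolding m_def .
  have "transpose_mat On *\<^sub>v (x *\<^sub>v (B *\<^sub>v (XD *\<^sub>v y)))
      = transpose_mat t *\<^sub>v (XD *\<^sub>v (x *\<^sub>v (B *\<^sub>v (XD *\<^sub>v y))))"
    unfolding Ot using assoc_mult_mat_vec[OF tt XDc, of "x *\<^sub>v (B *\<^sub>v (XD *\<^sub>v y))"] xc Bc XDc yc by simp
  also have "XD *\<^sub>v (x *\<^sub>v (B *\<^sub>v (XD *\<^sub>v y))) = (A * B * XD) *\<^sub>v y"
  proof -
    have "(A * B * XD) *\<^sub>v y = (A * B) *\<^sub>v (XD *\<^sub>v y)"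
      by (rule assoc_mult_mat_vec[OF mult_carrier_mat[OF Ac Bc] XDc yc])
    also have "\<dots> = A *\<^sub>v (B *\<^sub>v (XD *\<^sub>v y))"
      by (rule assoc_mult_mat_vec[OF Ac Bc mult_mat_vec_carrier[OF XDc yc]])
    also have "\<dots> = XD *\<^sub>v (x *\<^sub>v (B *\<^sub>v (XD *\<^sub>v y)))" unfolding A_def
      by (rule assoc_mult_mat_vec[OF XDc xc mult_mat_vec_carrier[OF Bc mult_mat_vec_carrier[OF XDc yc]]])
    finally show ?thesis by simp
  qed
  also have "\<dots> = XD *\<^sub>v y" unfolding key ..
  also have "transpose_mat t *\<^sub>v (XD *\<^sub>v y) = transpose_mat On *\<^sub>v y"
    unfolding Ot using assoc_mult_mat_vec[OF tt XDc yc] by simp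
  finally have main: "transpose_mat On *\<^sub>v (x *\<^sub>v (B *\<^sub>v (XD *\<^sub>v y))) = transpose_mat On *\<^sub>v y" .
  show ?thesis using main unfolding C[unfolded x_def] On_def x_def B_def A_def XD_def
    by (simp add: C[unfolded x_def XD_def] assoc_mult_mat[OF xt Dc xc, symmetric] WP[unfolded m_def])
qed

end
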